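(* Let $C_{(\mathcal T,\Psi_{\mathcal T})}$ be a nested Archimedean copula with regularly varying generators $\psi_v$ of index $-\alpha_v$, $\alpha_v>0$, $v\in\mathcal I$, and for $v\in\mathcal V$ let $\Lambda_v$ denote the tail copula of $C_v$, given recursively by $\Lambda_v(\bm x_{\mathrm{le}(v)})=x_v$ for $v\in\mathcal L$ and $\Lambda_v(\bm x_{\mathrm{le}(v)})=\left(\sum_{w\in\mathrm{ch}(v)}\Lambda_w(\bm x_{\mathrm{le}(w)})^{-1/\alpha_v}\right)^{-\alpha_v}$ for $v\in\mathcal I$. For $v\in\mathcal I$ let $\lambda^\ast(\Lambda_v)=\sup\{\Lambda_v(\bm b):\bm b\in(0,\infty)^{d(v)},\ \prod_{i\in\mathrm{le}(v)}b_i=1\}$ denote the MTCM of $C_v$. Empty products equal $1$. Then: (i) Recursively define $\lambda_v^\ast=1$ for $v\in\mathcal L$ and $$\lambda_v^\ast=d(v)^{-\alpha_v}\prod_{w\in\mathrm{ch}(v)}\left\{d(w)^{\alpha_v}\lambda_w^\ast\right\}^{d(w)/d(v)},\quad v\in\mathcal I.$$ Then $\lambda^\ast(\Lambda_v)=\lambda_v^\ast$ for all $v\in\mathcal I$. (ii) For all $v\in\mathcal I$, $$\lambda_v^\ast=d(v)^{-\alpha_v}\prod_{w\in\mathcal I_v\setminus\{v\}}d(w)^{(\alpha_{\mathrm{pa}(w)}-\alpha_w)d(w)/d(v)}.$$ (iii) For all $v\in\mathcal I$, the maximizer $\bm b_v^\ast$ of $\Lambda_v$ over $\{\bm b\in(0,\infty)^{d(v)}:\prod_{i\in\mathrm{le}(v)}b_i=1\}$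 is unique and, for each leaf $j\in\mathrm{le}(v)$, $$(\bm b_v^\ast)_j=\lambda_v^\ast\,d(v)^{\alpha_v}\prod_{w\in\mathrm{an}_v(j)}d(w)^{\alpha_w-\alpha_{\mathrm{pa}(w)}}.$$
   Context: An Archimedean generator is a continuous, decreasing $\psi:[0,\infty)\to[0,1]$ with $\psi(0)=1$, $\lim_{t\to\infty}\psi(t)=0$, strictly decreasing on $[0,\inf\{t:\psi(t)=0\}]$, with inverse $\psi^{-1}$; $\Psi_\infty$ is the set of completely monotone ones. $f:(0,\infty)\to(0,\infty)$ is regularly varying with index $\rho$ if $\lim_{x\to\infty}f(tx)/f(x)=t^\rho$ for all $t>0$. Let $\mathcal T=(\mathcal V,\mathcal E)$ be a rooted tree with root $r$, leaves $\mathcal L=\{1,\dots,d\}$, internal vertices $\mathcal I=\mathcal V\setminus\mathcal L$; $\mathrm{pa}(v)$ is the parent, $\mathrm{ch}(v)$ the children, $\mathrm{le}(v)$ the leaves of the subtree rooted at $v$ ($\mathrm{le}(v)=\{v\}$ for leaves), $d(v)=|\mathrm{le}(v)|$. For $v\in\mathcal V$, $\mathcal I_v$ denotes the set of internal vertices of the subtree $\mathcal T_v$ rooted at $v$, and for $w$ in $\mathcal T_v$, $\mathrm{an}_v(w)$ is the (possibly empty) set of ancestors of $w$ in $\mathcal T_v$, excluding the root $v$ (and excluding $w$ itself). Given $\{\psi_v\}_{v\in\mathcal I}\subseteq\Psi_\infty$, recursively set $C_v(\bm u_{\mathrm{le}(v)})=u_v$ for $v\in\mathcal L$ and $C_v(\bm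 u_{\mathrm{le}(v)})=\psi_v\left(\sum_{w\in\mathrm{ch}(v)}\psi_v^{-1}(C_w(\bm u_{\mathrm{le}(w)}))\right)$ for $v\in\mathcal I$; the nested Archimedean copula is $C_r$. The sufficient nesting condition is assumed: $(\psi_{\mathrm{pa}(v)}^{-1}\circ\psi_v)'$ is completely monotone for every $v\in\mathcal I\setminus\{r\}$. Regularly varying generators means each $\psi_v$ is regularly varying with index $-\alpha_v$, $\alpha_v>0$. The tail copula of a copula $C$ is $\Lambda(\bm x;C)=\lim_{t\downarrow0}C(t\bm x)/t$. *)

theory Defs
  imports "HOL-Analysis.Analysis"
begin

text \<open>A rooted tree is given by a finite vertex set V (of naturals), a root r and a parent
  function pa (only meaningful on V - {r}). Leaves are the vertices without children and
  must be exactly {1..d}.\<close>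

definition ch :: "nat set \<Rightarrow> nat \<Rightarrow> (nat \<Rightarrow> nat) \<Rightarrow> nat \<Rightarrow> nat set" where
  "ch V r pa v = {w \<in> V. w \<noteq> r \<and> pa w = v}"

definition is_rooted_tree :: "nat set \<Rightarrow> nat \<Rightarrow> (nat \<Rightarrow> nat) \<Rightarrow> nat \<Rightarrow> bool" where
  "is_rooted_tree V r pa d \<longleftrightarrow>
     finite V \<and> r \<in> V \<and> (\<forall>v \<in> V - {r}. pa v \<in> V) \<and>
     (\<forall>v \<in> V. \<exists>n. (pa ^^ n) v = r) \<and>
     {v \<in> V. ch V r pa v = {}} = {1..d}"

definition in_sub :: "nat set \<Rightarrow> nat \<Rightarrow> (nat \<Rightarrow> nat) \<Rightarrow> nat \<Rightarrow> nat \<Rightarrow> bool" where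
  "in_sub V r pa v w \<longleftrightarrow> w \<in> V \<and> (\<exists>n. (pa ^^ n) w = v \<and> (\<forall>k<n. (pa ^^ k) w \<noteq> r))"

definition internal :: "nat set \<Rightarrow> nat \<Rightarrow> nat set" where
  "internal V d = V - {1..d}"

definition le :: "nat set \<Rightarrow> nat \<Rightarrow> (nat \<Rightarrow> nat) \<Rightarrow> nat \<Rightarrow> nat \<Rightarrow> nat set" where
  "le V r pa d v = {j \<in> {1..d}. in_sub V r pa v j}"

definition dv :: "nat set \<Rightarrow> nat \<Rightarrow> (nat \<Rightarrow> nat) \<Rightarrow> nat \<Rightarrow> nat \<Rightarrow> real" where
  "dv V r pa d v = real (card (le V r pa d v))"

definition internal_sub :: "nat set \<Rightarrow> nat \<Rightarrow> (nat \<Rightarrow> nat) \<Rightarrow> nat \<Rightarrow> nat \<Rightarrow> nat set" where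
  "internal_sub V r pa d v = {w \<in> internal V d. in_sub V r pa v w}"

definition anc :: "nat set \<Rightarrow> nat \<Rightarrow> (nat \<Rightarrow> nat) \<Rightarrow> nat \<Rightarrow> nat \<Rightarrow> nat set" where
  "anc V r pa v j = {w \<in> V. w \<noteq> v \<and> w \<noteq> j \<and> in_sub V r pa w j \<and> in_sub V r pa v w}"

section \<open>Recursive tail copula and recursive MTCM (via fuel; fuel card V suffices)\<close>

primrec lam_fuel :: "nat set \<Rightarrow> nat \<Rightarrow> (nat \<Rightarrow> nat) \<Rightarrow> (nat \<Rightarrow> real) \<Rightarrow> nat \<Rightarrow> nat
    \<Rightarrow> (nat \<Rightarrow> real) \<Rightarrow> real" where
  "lam_fuel V r pa \<alpha> 0 v x = x v"
| "lam_fuel V r pa \<alpha> (Suc n) v x =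
     (if ch V r pa v = {} then x v
      else (\<Sum>w \<in> ch V r pa v. (lam_fuel V r pa \<alpha> n w x) powr (- 1 / \<alpha> v)) powr (- \<alpha> v))"

definition tail_cop :: "nat set \<Rightarrow> nat \<Rightarrow> (nat \<Rightarrow> nat) \<Rightarrow> (nat \<Rightarrow> real) \<Rightarrow> nat
    \<Rightarrow> (nat \<Rightarrow> real) \<Rightarrow> real" where
  "tail_cop V r pa \<alpha> v x = lam_fuel V r pa \<alpha> (card V) v x"

primrec lstar_fuel :: "nat set \<Rightarrow> nat \<Rightarrow> (nat \<Rightarrow> nat) \<Rightarrow> nat \<Rightarrow> (nat \<Rightarrow> real) \<Rightarrow> nat
    \<Rightarrow> nat \<Rightarrow> real" where
  "lstar_fuel V r pa d \<alpha> 0 v = 1"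
| "lstar_fuel V r pa d \<alpha> (Suc n) v =
     (if ch V r pa v = {} then 1
      else dv V r pa d v powr (- \<alpha> v) *
        (\<Prod>w \<in> ch V r pa v. (dv V r pa d w powr (\<alpha> v) * lstar_fuel V r pa d \<alpha> n w)
            powr (dv V r pa d w / dv V r pa d v)))"

definition lstar :: "nat set \<Rightarrow> nat \<Rightarrow> (nat \<Rightarrow> nat) \<Rightarrow> nat \<Rightarrow> (nat \<Rightarrow> real) \<Rightarrow> nat \<Rightarrow> real" where
  "lstar V r pa d \<alpha> v = lstar_fuel V r pa d \<alpha> (card V) v"

text \<open>Feasible points: b in (0,\<infinity>)^{le(v)} with product 1 (other coordinates irrelevant).\<close>
definition feasible :: "nat set \<Rightarrow> nat \<Rightarrow> (nat \<Rightarrow> nat) \<Rightarrow> nat \<Rightarrow> nat \<Rightarrow> (nat \<Rightarrow> real) \<Rightarrow> bool" where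
  "feasible V r pa d v b \<longleftrightarrow>
     (\<forall>i \<in> le V r pa d v. 0 < b i) \<and> (\<Prod>i \<in> le V r pa d v. b i) = 1"

definition mtcm :: "nat set \<Rightarrow> nat \<Rightarrow> (nat \<Rightarrow> nat) \<Rightarrow> nat \<Rightarrow> (nat \<Rightarrow> real) \<Rightarrow> nat \<Rightarrow> real" where
  "mtcm V r pa d \<alpha> v = Sup {tail_cop V r pa \<alpha> v b | b. feasible V r pa d v b}"

definition completely_monotone :: "(real \<Rightarrow> real) \<Rightarrow> bool" where
  "completely_monotone f \<longleftrightarrow>
     (\<forall>k x. 0 < x \<longrightarrow> ((deriv ^^ k) f) differentiable (at x) \<and>
                      0 \<le> (-1) ^ k * (deriv ^^ k) f x)"

definition archimedean_generator :: "(real \<Rightarrow> real) \<Rightarrow> bool" where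
  "archimedean_generator \<psi> \<longleftrightarrow>
     continuous_on {0..} \<psi> \<and> (\<forall>t \<ge> 0. 0 \<le> \<psi> t \<and> \<psi> t \<le> 1) \<and>
     (\<forall>s t. 0 \<le> s \<and> s \<le> t \<longrightarrow> \<psi> t \<le> \<psi> s) \<and> \<psi> 0 = 1 \<and> (\<psi> \<longlongrightarrow> 0) at_top \<and>
     (\<forall>s t. 0 \<le> s \<and> s < t \<and> (\<forall>u. 0 \<le> u \<and> \<psi> u = 0 \<longrightarrow> t \<le> u) \<longrightarrow> \<psi> t < \<psi> s)"

definition Psi_inf :: "(real \<Rightarrow> real) \<Rightarrow> bool" where
  "Psi_inf \<psi> \<longleftrightarrow> archimedean_generator \<psi> \<and> completely_monotone \<psi>"

definition regularly_varying :: "(real \<Rightarrow> real) \<Rightarrow> real \<Rightarrow> bool" where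
  "regularly_varying f \<rho> \<longleftrightarrow> (\<forall>x > 0. 0 < f x) \<and>
     (\<forall>t > 0. ((\<lambda>x. f (t * x) / f x) \<longlongrightarrow> t powr \<rho>) at_top)"

definition gen_inv :: "(real \<Rightarrow> real) \<Rightarrow> real \<Rightarrow> real" where
  "gen_inv \<psi> = inv_into {0..} \<psi>"

text \<open>Sufficient nesting condition: (\<psi>_parent^{-1} \<circ> \<psi>_child)' is completely monotone.\<close>
definition nesting_cond :: "(real \<Rightarrow> real) \<Rightarrow> (real \<Rightarrow> real) \<Rightarrow> bool" where
  "nesting_cond \<psi>p \<psi>c \<longleftrightarrow>
     (\<forall>t > 0. (\<lambda>s. gen_inv \<psi>p (\<psi>c s)) differentiable (at t)) \<and>
     completely_monotone (deriv (\<lambda>s. gen_inv \<psi>p (\<psi>c s)))"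

end

theory Submission
  imports Defs
begin

lemma exp_eq_one_plus: fixes t :: real assumes "exp t = 1 + t" shows "t = 0"
proof (rule ccontr)
  assume t: "t \<noteq> 0"
  show False
  proof (cases "1 + t/2 \<ge> 0")
    case True
    have "exp t = exp (t/2) * exp (t/2)" by (simp flip: exp_add)
    also have "\<dots> \<ge> (1 + t/2) * (1 + t/2)"
      using True exp_ge_add_one_self[of "t/2"] by (intro mult_mono) auto
    finally have "exp t \<ge> 1 + t + t*t/4" by (simp add: algebra_simps)
    moreover have "t*t > 0" using t by (metis not_real_square_gt_zero)
    ultimately show False using assms by simp
  next
    case False
    then have "1 + t < 0" by simp
    then show False using assms exp_gt_zero[of t] by simp
  qed
qed

lemma jensen_exp:
  fixes a s :: "'a \<Rightarrow> real"
  assumes fin: "finite W" and ne: "W \<noteq> {}" and apos: "\<And>w. w \<in> W \<Longrightarrow> 0 < a w"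
    and asum: "(\<Sum>w\<in>W. a w) = 1"
  shows "exp (\<Sum>w\<in>W. a w * s w) \<le> (\<Sum>w\<in>W. a w * exp (s w))"
    and "exp (\<Sum>w\<in>W. a w * s w) = (\<Sum>w\<in>W. a w * exp (s w)) \<Longrightarrow> w \<in> W \<Longrightarrow> s w = (\<Sum>w\<in>W. a w * s w)"
proof -
  define m where "m = (\<Sum>w\<in>W. a w * s w)"
  define g where "g w = a w * exp m * (exp (s w - m) - 1 - (s w - m))" for w
  have gnn: "g w \<ge> 0" if "w \<in> W" for w
  proof -
    have "1 + (s w - m) \<le> exp (s w - m)" by (rule exp_ge_add_one_self)
    then have "0 \<le> exp (s w - m) - 1 - (s w - m)" by linarith
    then show ?thesis unfolding g_def using apos[OF that]
      by (intro mult_nonneg_nonneg) auto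
  qed
  have ex: "exp (s w) = exp m * exp (s w - m)" for w by (simp flip: exp_add)
  have "(\<Sum>w\<in>W. g w) = (\<Sum>w\<in>W. a w * exp (s w)) - exp m * (\<Sum>w\<in>W. a w) 
        + exp m * ((\<Sum>w\<in>W. a w) * m - (\<Sum>w\<in>W. a w * s w))"
    unfolding g_def ex
    by (simp add: algebra_simps sum_subtractf sum_distrib_left sum_distrib_right sum.distrib)
  also have "\<dots> = (\<Sum>w\<in>W. a w * exp (s w)) - exp m"
    using asum by (simp add: m_def)
  finally have key: "(\<Sum>w\<in>W. g w) = (\<Sum>w\<in>W. a w * exp (s w)) - exp m" .
  have "(\<Sum>w\<in>W. g w) \<ge> 0" using gnn by (simp add: sum_nonneg)
  then show "exp (\<Sum>w\<in>W. a w * s w) \<le> (\<Sum>w\<in>W. a w * exp (s w))"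
    using key by (simp add: m_def)
  assume eq: "exp (\<Sum>w\<in>W. a w * s w) = (\<Sum>w\<in>W. a w * exp (s w))" and wW: "w \<in> W"
  then have "(\<Sum>w\<in>W. g w) = 0" using key by (simp add: m_def)
  then have "g w = 0" using sum_nonneg_eq_0_iff[OF fin] gnn wW by blast
  then have "exp (s w - m) = 1 + (s w - m)" using apos[OF wW] unfolding g_def by simp
  then have "s w - m = 0" by (rule exp_eq_one_plus)
  then show "s w = (\<Sum>w\<in>W. a w * s w)" by (simp add: m_def)
qed



locale tctx =
  fixes V :: "nat set" and r :: nat and pa :: "nat \<Rightarrow> nat" and d :: nat and \<alpha> :: "nat \<Rightarrow> real"
  assumes tree: "is_rooted_tree V r pa d"
    and apos: "\<forall>v \<in> internal V d. 0 < \<alpha> v"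
begin

abbreviation "isub \<equiv> in_sub V r pa"
abbreviation "chd \<equiv> ch V r pa"

lemma finV: "finite V" and rV: "r \<in> V" and paV: "v \<in> V \<Longrightarrow> v \<noteq> r \<Longrightarrow> pa v \<in> V"
  and reach: "v \<in> V \<Longrightarrow> \<exists>n. (pa^^n) v = r"
  and leaves: "{v \<in> V. chd v = {}} = {1..d}"
  using tree unfolding is_rooted_tree_def by auto

lemma path_in_V: "u \<in> V \<Longrightarrow> (\<forall>k<n. (pa^^k) u \<noteq> r) \<Longrightarrow> (pa^^n) u \<in> V"
proof (induction n)
  case 0 then show ?case by simp
next
  case (Suc n)
  then have "(pa^^n) u \<in> V" "(pa^^n) u \<noteq> r" by auto
  then show ?case by (simp add: paV)
qed

lemma isub_V1: "isub v u \<Longrightarrow> v \<in> V"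
  unfolding in_sub_def using path_in_V by blast

lemma isub_V2: "isub v u \<Longrightarrow> u \<in> V"
  unfolding in_sub_def by blast

lemma isub_refl: "v \<in> V \<Longrightarrow> isub v v"
  unfolding in_sub_def by (intro conjI exI[of _ 0]) auto

lemma isub_trans: assumes "isub a b" "isub b c" shows "isub a c"
proof -
  obtain n1 where n1: "(pa^^n1) c = b" "\<forall>k<n1. (pa^^k) c \<noteq> r" using assms(2) unfolding in_sub_def by blast
  obtain n2 where n2: "(pa^^n2) b = a" "\<forall>k<n2. (pa^^k) b \<noteq> r" using assms(1) unfolding in_sub_def by blast
  have "(pa^^(n2+n1)) c = a" using n1 n2 by (simp add: funpow_add)
  moreover have "(pa^^k) c \<noteq> r" if "k < n2 + n1" for k
  proof (cases "k < n1")
    case True then show ?thesis using n1 by blast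
  next
    case False
    then have "(pa^^k) c = (pa^^(k-n1)) b"
      using n1(1) by (metis funpow_add le_add_diff_inverse2 not_less o_apply)
    then show ?thesis using n2 that False by auto
  qed
  ultimately show ?thesis using isub_V2[OF assms(2)] unfolding in_sub_def by blast
qed

lemma ch_V: "w \<in> chd v \<Longrightarrow> w \<in> V" and ch_nr: "w \<in> chd v \<Longrightarrow> w \<noteq> r"
  and ch_pa: "w \<in> chd v \<Longrightarrow> pa w = v"
  unfolding ch_def by auto

lemma ch_isub: "w \<in> chd v \<Longrightarrow> isub v w"
  unfolding in_sub_def ch_def by (intro conjI exI[of _ 1]) auto

lemma isub_step: assumes "isub v u" "u \<noteq> v" shows "\<exists>w\<in>chd v. isub w u"
proof -
  obtain n where n: "(pa^^n) u = v" "\<forall>k<n. (pa^^k) u \<noteq> r" "u \<in> V" using assms(1) unfolding in_sub_def by blast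
  have "n \<noteq> 0"
  proof
    assume "n = 0" then show False using n assms(2) by simp
  qed
  then obtain m where m: "n = Suc m" by (cases n) auto
  define w where "w = (pa^^m) u"
  have wV: "w \<in> V" unfolding w_def using path_in_V n m by auto
  have "w \<noteq> r" using n m w_def by auto
  moreover have "pa w = v" using n m w_def by simp
  ultimately have "w \<in> chd v" using wV unfolding ch_def by simp
  moreover have "isub w u" unfolding in_sub_def w_def using n m
    by (intro conjI exI[of _ m]) auto
  ultimately show ?thesis by blast
qed

lemma no_cycle: assumes "w \<in> chd v" shows "\<not> isub w v"
proof
  assume "isub w v"
  then obtain n where n: "(pa^^n) v = w" "\<forall>k<n. (pa^^k) v \<noteq> r" "v \<in> V" unfolding in_sub_def by blast
  have per: "(pa^^(Suc n)) v = v" using n assms ch_pa by simp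
  have lt: "(pa^^k) v \<noteq> r" if "k < Suc n" for k
    using n that assms ch_nr by (metis less_Suc_eq)
  obtain m where "(pa^^m) v = r" using reach n by blast
  moreover have "(pa^^(m mod Suc n)) v = (pa^^m) v" using funpow_mod_eq[OF per] .
  ultimately show False using lt by (metis mod_less_divisor zero_less_Suc)
qed

lemma isub_cmp: assumes "(pa^^n1) u = a" "\<forall>k<n1. (pa^^k) u \<noteq> r"
   "(pa^^n2) u = b" "\<forall>k<n2. (pa^^k) u \<noteq> r" "n1 \<le> n2" "u \<in> V"
  shows "isub b a"
proof -
  have "(pa^^(n2-n1)) a = b" using assms by (metis funpow_add le_add_diff_inverse2 o_apply)
  moreover have "(pa^^k) a \<noteq> r" if "k < n2 - n1" for k
  proof -
    have "(pa^^k) a = (pa^^(k+n1)) u" using assms(1) by (simp add: funpow_add)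
    then show ?thesis using assms(4) that by auto
  qed
  moreover have "a \<in> V" using assms path_in_V by blast
  ultimately show ?thesis unfolding in_sub_def by blast
qed

lemma isub_up: assumes "isub b a" "a \<noteq> b" shows "isub b (pa a)"
proof -
  obtain n where n: "(pa^^n) a = b" "\<forall>k<n. (pa^^k) a \<noteq> r" "a \<in> V" using assms(1) unfolding in_sub_def by blast
  have "n \<noteq> 0"
  proof
    assume "n = 0" then show False using n assms(2) by simp
  qed
  then obtain m where m: "n = Suc m" by (cases n) auto
  have ar: "a \<noteq> r" using n m by (metis funpow_0 zero_less_Suc)
  have "(pa^^m) (pa a) = b" using n m by (simp add: funpow_swap1)
  moreover have "(pa^^k) (pa a) \<noteq> r" if "k < m" for k
    using n m that by (metis Suc_mono funpow_Suc_right o_apply)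
  ultimately show ?thesis unfolding in_sub_def using paV[OF n(3) ar] by blast
qed

lemma ch_disj: assumes "w1 \<in> chd v" "w2 \<in> chd v" "isub w1 u" "isub w2 u" shows "w1 = w2"
proof -
  obtain n1 where n1: "(pa^^n1) u = w1" "\<forall>k<n1. (pa^^k) u \<noteq> r" "u \<in> V" using assms(3) unfolding in_sub_def by blast
  obtain n2 where n2: "(pa^^n2) u = w2" "\<forall>k<n2. (pa^^k) u \<noteq> r" using assms(4) unfolding in_sub_def by blast
  have gen: "x1 = x2" if "x1 \<in> chd v" "x2 \<in> chd v" "isub x2 x1" for x1 x2
  proof (rule ccontr)
    assume "x1 \<noteq> x2"
    then have "isub x2 (pa x1)" using isub_up that by blast
    then show False using no_cycle that ch_pa by metis
  qed
  show ?thesis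
  proof (cases "n1 \<le> n2")
    case True
    then have "isub w2 w1" using isub_cmp n1 n2 by blast
    then show ?thesis using gen assms by blast
  next
    case False
    then have "isub w1 w2" using isub_cmp n1 n2 by (meson nat_le_linear)
    then show ?thesis using gen assms by metis
  qed
qed

definition sub where "sub v = {u. isub v u}"

lemma sub_fin: "finite (sub v)" and sub_V: "sub v \<subseteq> V"
  using finV isub_V2 unfolding sub_def by (auto intro: finite_subset)

lemma card_sub_less: assumes "w \<in> chd v" shows "card (sub w) < card (sub v)"
proof (rule psubset_card_mono[OF sub_fin])
  have "sub w \<subseteq> sub v" unfolding sub_def using ch_isub[OF assms] isub_trans by blast
  moreover have "v \<in> sub v" "v \<notin> sub w" unfolding sub_def
    using isub_refl isub_V1 ch_isub[OF assms] no_cycle[OF assms] by auto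
  ultimately show "sub w \<subset> sub v" by blast
qed

lemma tree_induct[consumes 1, case_names step]:
  assumes "v \<in> V" and step: "\<And>v. v \<in> V \<Longrightarrow> (\<And>w. w \<in> chd v \<Longrightarrow> P w) \<Longrightarrow> P v"
  shows "P v"
  using assms(1)
proof (induction "card (sub v)" arbitrary: v rule: less_induct)
  case less
  show ?case
    by (rule step[OF less.prems]) (metis less.hyps card_sub_less ch_V)
qed

lemma chd_fin: "finite (chd v)" using finV unfolding ch_def by simp

lemma leaf_iff: "v \<in> V \<Longrightarrow> chd v = {} \<longleftrightarrow> v \<in> {1..d}"
  using leaves by blast

lemma internal_iff: "v \<in> internal V d \<longleftrightarrow> v \<in> V \<and> chd v \<noteq> {}"
  unfolding internal_def using leaves by blast

abbreviation "lv \<equiv> le V r pa d"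
abbreviation "dd \<equiv> dv V r pa d"

lemma lv_fin: "finite (lv v)" unfolding le_def by simp

lemma sub_leaf: assumes "v \<in> V" "chd v = {}" "isub v u" shows "u = v"
  using isub_step assms by blast

lemma lv_leaf: assumes "v \<in> V" "chd v = {}" shows "lv v = {v}"
  unfolding le_def using sub_leaf[OF assms] isub_refl[OF assms(1)] leaf_iff[OF assms(1)] assms(2) by auto

lemma lv_int: assumes "v \<in> V" "chd v \<noteq> {}" shows "lv v = (\<Union>w\<in>chd v. lv w)"
proof
  show "lv v \<subseteq> (\<Union>w\<in>chd v. lv w)"
  proof
    fix j assume j: "j \<in> lv v"
    then have "j \<noteq> v" using leaf_iff[OF assms(1)] assms(2) unfolding le_def by auto
    then obtain w where "w \<in> chd v" "isub w j" using isub_step j unfolding le_def by blast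
    then show "j \<in> (\<Union>w\<in>chd v. lv w)" using j unfolding le_def by auto
  qed
  show "(\<Union>w\<in>chd v. lv w) \<subseteq> lv v"
    unfolding le_def using ch_isub isub_trans by blast
qed

lemma lv_disj: "w1 \<in> chd v \<Longrightarrow> w2 \<in> chd v \<Longrightarrow> w1 \<noteq> w2 \<Longrightarrow> lv w1 \<inter> lv w2 = {}"
  unfolding le_def using ch_disj by blast

lemma dd_sum: assumes "v \<in> V" "chd v \<noteq> {}" shows "dd v = (\<Sum>w\<in>chd v. dd w)"
proof -
  have "card (lv v) = (\<Sum>w\<in>chd v. card (lv w))"
    unfolding lv_int[OF assms] using chd_fin lv_fin lv_disj
    by (intro card_UN_disjoint) auto
  then show ?thesis unfolding dv_def by simp
qed

lemma dd_leaf: "v \<in> V \<Longrightarrow> chd v = {} \<Longrightarrow> dd v = 1"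
  unfolding dv_def using lv_leaf by simp

lemma lv_ne: "v \<in> V \<Longrightarrow> lv v \<noteq> {}"
proof (induction v rule: tree_induct)
  case (step v)
  show ?case
  proof (cases "chd v = {}")
    case True then show ?thesis using lv_leaf step by simp
  next
    case False
    then obtain w where "w \<in> chd v" by blast
    then show ?thesis using step lv_int[OF step(1) False] ch_V by blast
  qed
qed

lemma dd_ge1: "v \<in> V \<Longrightarrow> dd v \<ge> 1"
  unfolding dv_def using lv_ne lv_fin by (simp add: Suc_le_eq card_gt_0_iff)

lemma dd_pos: "v \<in> V \<Longrightarrow> dd v > 0"
  using dd_ge1 by fastforce

end


context tctx begin

abbreviation "Lam \<equiv> tail_cop V r pa \<alpha>"
abbreviation "Ls \<equiv> lstar V r pa d \<alpha>"

lemma card_sub_V: "card (sub v) \<le> card V" using card_mono[OF finV sub_V] .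

lemma card_sub_pos: "v \<in> V \<Longrightarrow> card (sub v) \<ge> 1"
  using isub_refl sub_fin unfolding sub_def by (metis One_nat_def Suc_leI card_gt_0_iff empty_iff mem_Collect_eq)

lemma lam_stab: "v \<in> V \<Longrightarrow> card (sub v) \<le> n \<Longrightarrow>
   lam_fuel V r pa \<alpha> (Suc n) v x = lam_fuel V r pa \<alpha> n v x"
proof (induction n arbitrary: v)
  case 0 then show ?case using card_sub_pos by fastforce
next
  case (Suc n)
  have "lam_fuel V r pa \<alpha> (Suc n) w x = lam_fuel V r pa \<alpha> n w x" if "w \<in> chd v" for w
    using Suc.IH[of w] card_sub_less[OF that] Suc.prems ch_V[OF that] by simp
  then show ?case by (simp cong: sum.cong)
qed

lemma lstar_stab: "v \<in> V \<Longrightarrow> card (sub v) \<le> n \<Longrightarrow>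
   lstar_fuel V r pa d \<alpha> (Suc n) v = lstar_fuel V r pa d \<alpha> n v"
proof (induction n arbitrary: v)
  case 0 then show ?case using card_sub_pos by fastforce
next
  case (Suc n)
  have "lstar_fuel V r pa d \<alpha> (Suc n) w = lstar_fuel V r pa d \<alpha> n w" if "w \<in> chd v" for w
    using Suc.IH[of w] card_sub_less[OF that] Suc.prems ch_V[OF that] by simp
  then show ?case by (simp cong: prod.cong)
qed

lemma lam_stab2: "v \<in> V \<Longrightarrow> card (sub v) \<le> n \<Longrightarrow>
   lam_fuel V r pa \<alpha> (n + j) v x = lam_fuel V r pa \<alpha> n v x"
proof (induction j)
  case (Suc j)
  then show ?case using lam_stab[of v "n+j" x] by (metis add_Suc_right le_add1 le_trans)
qed simp

lemma lstar_stab2: "v \<in> V \<Longrightarrow> card (sub v) \<le> n \<Longrightarrow>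
   lstar_fuel V r pa d \<alpha> (n + j) v = lstar_fuel V r pa d \<alpha> n v"
proof (induction j)
  case (Suc j)
  then show ?case using lstar_stab[of v "n+j"] by (metis add_Suc_right le_add1 le_trans)
qed simp

lemma cardV_Suc: obtains m where "card V = Suc m"
  using finV rV by (metis card_0_eq empty_iff not0_implies_Suc)

lemma lam_leaf: "chd v = {} \<Longrightarrow> Lam v x = x v"
  unfolding tail_cop_def by (cases "card V") auto

lemma lstar_leaf: "chd v = {} \<Longrightarrow> Ls v = 1"
  unfolding lstar_def by (cases "card V") auto

lemma lam_rec: assumes "v \<in> V" "chd v \<noteq> {}"
  shows "Lam v x = (\<Sum>w\<in>chd v. Lam w x powr (- 1 / \<alpha> v)) powr (- \<alpha> v)"
proof -
  obtain m where m: "card V = Suc m" by (rule cardV_Suc)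
  have "lam_fuel V r pa \<alpha> m w x = Lam w x" if "w \<in> chd v" for w
  proof -
    have "card (sub w) \<le> m" using card_sub_less[OF that] card_sub_V[of v] m by simp
    then show ?thesis unfolding tail_cop_def m using lam_stab ch_V[OF that] by simp
  qed
  then show ?thesis using assms unfolding tail_cop_def m by (simp cong: sum.cong)
qed

lemma lstar_rec: assumes "v \<in> V" "chd v \<noteq> {}"
  shows "Ls v = dd v powr (- \<alpha> v) *
        (\<Prod>w \<in> chd v. (dd w powr (\<alpha> v) * Ls w) powr (dd w / dd v))"
proof -
  obtain m where m: "card V = Suc m" by (rule cardV_Suc)
  have "lstar_fuel V r pa d \<alpha> m w = Ls w" if "w \<in> chd v" for w
  proof -
    have "card (sub w) \<le> m" using card_sub_less[OF that] card_sub_V[of v] m by simp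
    then show ?thesis unfolding lstar_def m using lstar_stab ch_V[OF that] by simp
  qed
  then show ?thesis using assms unfolding lstar_def m by (simp cong: prod.cong)
qed

end


context tctx begin

definition beta where
  "beta v j = dd v powr \<alpha> v * (\<Prod>u\<in>anc V r pa v j. dd u powr (\<alpha> u - \<alpha> (pa u)))"

lemma anc_V: "anc V r pa v j \<subseteq> V" unfolding anc_def by auto
lemma anc_fin: "finite (anc V r pa v j)" using finite_subset[OF anc_V finV] .

lemma leaf_of_lv: "j \<in> lv v \<Longrightarrow> j \<in> V \<and> chd j = {}"
  unfolding le_def using leaf_iff isub_V2 by blast

lemma anc_rec: assumes w: "w \<in> chd v" and j: "j \<in> lv w"
  shows "anc V r pa v j = (if w = j then {} else insert w (anc V r pa w j))"
proof -
  have wj: "isub w j" using j unfolding le_def by simp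
  have jleaf: "j \<in> V" "chd j = {}" using leaf_of_lv[OF j] by auto
  have wV: "w \<in> V" using ch_V[OF w] .
  have vw: "isub v w" using ch_isub[OF w] .
  have wnv: "w \<noteq> v" using no_cycle[OF w] isub_refl[OF wV] by blast
  have A: "isub w u" if "u \<in> anc V r pa v j" for u
  proof -
    from that have u: "u \<noteq> v" "isub u j" "isub v u" unfolding anc_def by auto
    obtain c where c: "c \<in> chd v" "isub c u" using isub_step[OF u(3) u(1)] by blast
    have "isub c j" using isub_trans[OF c(2) u(2)] .
    then have "c = w" using ch_disj[OF c(1) w _ wj] by simp
    then show ?thesis using c by simp
  qed
  show ?thesis
  proof (cases "w = j")
    case True
    have "False" if "u \<in> anc V r pa v j" for u
    proof -
      have "isub w u" using A[OF that] .
      then have "u = j" using sub_leaf[OF jleaf] True by simp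
      then show False using that unfolding anc_def by simp
    qed
    then have "anc V r pa v j = {}" by blast
    then show ?thesis using True by simp
  next
    case False
    have "anc V r pa v j \<subseteq> insert w (anc V r pa w j)"
    proof
      fix u assume u: "u \<in> anc V r pa v j"
      show "u \<in> insert w (anc V r pa w j)"
        using A[OF u] u unfolding anc_def by auto
    qed
    moreover have "w \<in> anc V r pa v j"
      unfolding anc_def using wV wnv False wj vw by simp
    moreover have "anc V r pa w j \<subseteq> anc V r pa v j"
    proof
      fix u assume u: "u \<in> anc V r pa w j"
      then have "isub w u" by (simp add: anc_def)
      then have "u \<noteq> v" using no_cycle[OF w] by blast
      then show "u \<in> anc V r pa v j" using u isub_trans[OF vw] unfolding anc_def by auto
    qed
    ultimately show ?thesis using False by auto
  qed
qed

lemma beta_rec: assumes w: "w \<in> chd v" and j: "j \<in> lv w"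
  shows "beta v j = dd v powr \<alpha> v * dd w powr (- \<alpha> v) * beta w j"
proof (cases "w = j")
  case True
  have jleaf: "j \<in> V" "chd j = {}" using leaf_of_lv[OF j] by auto
  have "anc V r pa j j = {}" unfolding anc_def using sub_leaf[OF jleaf] by auto
  then show ?thesis using anc_rec[OF w j] True dd_leaf[OF jleaf] unfolding beta_def by simp
next
  case False
  have nin: "w \<notin> anc V r pa w j" unfolding anc_def by auto
  have "beta v j = dd v powr \<alpha> v * (dd w powr (\<alpha> w - \<alpha> v) *
     (\<Prod>u\<in>anc V r pa w j. dd u powr (\<alpha> u - \<alpha> (pa u))))"
    unfolding beta_def anc_rec[OF w j] using False nin anc_fin ch_pa[OF w] by simp
  also have "dd w powr (\<alpha> w - \<alpha> v) = dd w powr (- \<alpha> v) * dd w powr \<alpha> w"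
    by (simp flip: powr_add)
  finally show ?thesis unfolding beta_def by (simp add: mult_ac)
qed

lemma beta_leaf: "v \<in> V \<Longrightarrow> chd v = {} \<Longrightarrow> beta v v = 1"
proof -
  assume a: "v \<in> V" "chd v = {}"
  moreover have "anc V r pa v v = {}" unfolding anc_def using sub_leaf[OF a] by auto
  ultimately show ?thesis unfolding beta_def using dd_leaf by simp
qed

lemma dd_powr_pos: "u \<in> V \<Longrightarrow> 0 < dd u powr e"
  using dd_pos[of u] by simp

lemma beta_pos: "v \<in> V \<Longrightarrow> 0 < beta v j"
  unfolding beta_def using anc_V
  by (intro mult_pos_pos prod_pos dd_powr_pos) auto

abbreviation "isb \<equiv> internal_sub V r pa d"

lemma isb_fin: "finite (isb v)" using finV unfolding internal_sub_def internal_def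
  by (auto intro: finite_subset)

lemma isb_V: "isb v \<subseteq> V" unfolding internal_sub_def internal_def by auto

lemma isb_dec: assumes "v \<in> V" shows "isb v - {v} = (\<Union>w\<in>chd v. isb w)"
proof
  show "isb v - {v} \<subseteq> (\<Union>w\<in>chd v. isb w)"
  proof
    fix u assume u: "u \<in> isb v - {v}"
    then obtain c where "c \<in> chd v" "isub c u"
      using isub_step unfolding internal_sub_def by blast
    then show "u \<in> (\<Union>w\<in>chd v. isb w)" using u unfolding internal_sub_def by auto
  qed
  show "(\<Union>w\<in>chd v. isb w) \<subseteq> isb v - {v}"
  proof
    fix u assume "u \<in> (\<Union>w\<in>chd v. isb w)"
    then obtain w where w: "w \<in> chd v" "u \<in> isb w" by blast
    then have "isub w u" "u \<in> internal V d" unfolding internal_sub_def by auto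
    moreover have "u \<noteq> v" using no_cycle[OF w(1)] calculation(1) by blast
    ultimately show "u \<in> isb v - {v}" using isub_trans[OF ch_isub[OF w(1)]]
      unfolding internal_sub_def by auto
  qed
qed

lemma isb_disj: "w1 \<in> chd v \<Longrightarrow> w2 \<in> chd v \<Longrightarrow> w1 \<noteq> w2 \<Longrightarrow> isb w1 \<inter> isb w2 = {}"
  unfolding internal_sub_def using ch_disj by blast

lemma isb_leaf: "v \<in> V \<Longrightarrow> chd v = {} \<Longrightarrow> isb v = {}"
  unfolding internal_sub_def using sub_leaf internal_iff by blast

lemma isb_int: "v \<in> V \<Longrightarrow> chd v \<noteq> {} \<Longrightarrow> isb v = insert v (isb v - {v})"
  unfolding internal_sub_def using internal_iff isub_refl by blast

end


context tctx begin

lemma apos_int: "v \<in> V \<Longrightarrow> chd v \<noteq> {} \<Longrightarrow> 0 < \<alpha> v"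
  using apos internal_iff by blast

lemma Ls_pos: "v \<in> V \<Longrightarrow> 0 < Ls v"
proof (induction v rule: tree_induct)
  case (step v)
  show ?case
  proof (cases "chd v = {}")
    case True then show ?thesis by (simp add: lstar_leaf)
  next
    case False
    have "0 < (dd w powr \<alpha> v * Ls w) powr (dd w / dd v)" if "w \<in> chd v" for w
      using step(2)[OF that] dd_powr_pos[OF ch_V[OF that], of "\<alpha> v"] by simp
    then show ?thesis unfolding lstar_rec[OF step(1) False] using dd_powr_pos[OF step(1)]
      by (intro mult_pos_pos prod_pos) auto
  qed
qed

lemma ln_Ls_rec: assumes "v \<in> V" "chd v \<noteq> {}"
  shows "ln (Ls v) = - \<alpha> v * ln (dd v) + (\<Sum>w\<in>chd v. dd w / dd v * (\<alpha> v * ln (dd w) + ln (Ls w)))"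
proof -
  have p1: "0 < (dd w powr \<alpha> v * Ls w) powr (dd w / dd v)" if "w \<in> chd v" for w
    using Ls_pos[OF ch_V[OF that]] dd_powr_pos[OF ch_V[OF that], of "\<alpha> v"] by simp
  have p2: "0 < (\<Prod>w\<in>chd v. (dd w powr \<alpha> v * Ls w) powr (dd w / dd v))"
    using p1 by (intro prod_pos) auto
  have "ln (Ls v) = ln (dd v powr (- \<alpha> v)) + ln (\<Prod>w\<in>chd v. (dd w powr \<alpha> v * Ls w) powr (dd w / dd v))"
    unfolding lstar_rec[OF assms] using p2 dd_powr_pos[OF assms(1)] by (simp add: ln_mult)
  also have "ln (\<Prod>w\<in>chd v. (dd w powr \<alpha> v * Ls w) powr (dd w / dd v))
     = (\<Sum>w\<in>chd v. ln ((dd w powr \<alpha> v * Ls w) powr (dd w / dd v)))"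
    using p1 chd_fin by (intro ln_prod) auto
  also have "\<dots> = (\<Sum>w\<in>chd v. dd w / dd v * (\<alpha> v * ln (dd w) + ln (Ls w)))"
  proof (rule sum.cong)
    fix w assume w: "w \<in> chd v"
    show "ln ((dd w powr \<alpha> v * Ls w) powr (dd w / dd v)) = dd w / dd v * (\<alpha> v * ln (dd w) + ln (Ls w))"
      using Ls_pos[OF ch_V[OF w]] dd_powr_pos[OF ch_V[OF w], of "\<alpha> v"] by (simp add: ln_mult)
  qed simp
  finally show ?thesis by simp
qed

lemma lv_sub: "w \<in> chd v \<Longrightarrow> v \<in> V \<Longrightarrow> lv w \<subseteq> lv v"
  using lv_int by blast

lemma lam_pos: "v \<in> V \<Longrightarrow> (\<forall>j\<in>lv v. 0 < x j) \<Longrightarrow> 0 < Lam v x"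
proof (induction v rule: tree_induct)
  case (step v)
  show ?case
  proof (cases "chd v = {}")
    case True then show ?thesis using lam_leaf lv_leaf step by simp
  next
    case False
    have "0 < Lam w x powr (- 1 / \<alpha> v)" if "w \<in> chd v" for w
    proof -
      have "0 < Lam w x" using step(2)[OF that] lv_sub[OF that step(1)] step(3) by blast
      then show ?thesis by simp
    qed
    then have "0 < (\<Sum>w\<in>chd v. Lam w x powr (- 1 / \<alpha> v))"
      using False chd_fin by (intro sum_pos) auto
    then show ?thesis unfolding lam_rec[OF step(1) False] by simp
  qed
qed

lemma ln_lam_rec: assumes "v \<in> V" "chd v \<noteq> {}" "\<forall>j\<in>lv v. 0 < x j"
  shows "ln (Lam v x) = - \<alpha> v * ln (\<Sum>w\<in>chd v. exp (- ln (Lam w x) / \<alpha> v))"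
proof -
  have "Lam w x powr (- 1 / \<alpha> v) = exp (- ln (Lam w x) / \<alpha> v)" if "w \<in> chd v" for w
  proof -
    have "0 < Lam w x" using lam_pos[OF ch_V[OF that], of x] lv_sub[OF that assms(1)] assms(3) by blast
    then show ?thesis unfolding powr_def by simp
  qed
  then show ?thesis unfolding lam_rec[OF assms(1,2)] by (simp cong: sum.cong)
qed

end


context tctx begin

lemma main_bound:
  "v \<in> V \<Longrightarrow> \<forall>x. (\<forall>j\<in>lv v. 0 < x j) \<longrightarrow>
     ln (Lam v x) \<le> ln (Ls v) + (\<Sum>j\<in>lv v. ln (x j)) / dd v \<and>
     (ln (Lam v x) = ln (Ls v) + (\<Sum>j\<in>lv v. ln (x j)) / dd v \<longrightarrow> (\<forall>j\<in>lv v. x j = Lam v x * beta v j))"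
proof (induction v rule: tree_induct)
  case (step v)
  show ?case
  proof (intro allI impI)
    fix x :: "nat \<Rightarrow> real" assume xpos: "\<forall>j\<in>lv v. 0 < x j"
    show "ln (Lam v x) \<le> ln (Ls v) + (\<Sum>j\<in>lv v. ln (x j)) / dd v \<and>
     (ln (Lam v x) = ln (Ls v) + (\<Sum>j\<in>lv v. ln (x j)) / dd v \<longrightarrow> (\<forall>j\<in>lv v. x j = Lam v x * beta v j))"
    proof (cases "chd v = {}")
      case True
      then show ?thesis using lv_leaf[OF step(1) True] lam_leaf[OF True] lstar_leaf[OF True]
          dd_leaf[OF step(1) True] beta_leaf[OF step(1) True] by simp
    next
      case False
      define W where "W = chd v"
      define a where "a = \<alpha> v"
      have a: "0 < a" using apos_int step(1) False a_def by blast
      define u where "u w = ln (Lam w x)" for w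
      define Q where "Q w = (\<Sum>j\<in>lv w. ln (x j))" for w
      define mu where "mu w = ln (Ls w) + Q w / dd w" for w
      define c where "c w = dd w / dd v" for w
      define s where "s w = ln (dd v / dd w) - mu w / a" for w
      define S where "S = (\<Sum>w\<in>W. exp (- u w / a))"
      have finW: "finite W" "W \<noteq> {}" using chd_fin False W_def by auto
      have wV: "w \<in> V" if "w \<in> W" for w using ch_V that W_def by blast
      have xw: "\<forall>j\<in>lv w. 0 < x j" if "w \<in> W" for w using lv_sub step(1) xpos W_def that by blast
      have IH: "u w \<le> mu w \<and> (u w = mu w \<longrightarrow> (\<forall>j\<in>lv w. x j = Lam w x * beta w j))" if "w \<in> W" for w
        using step(2) xw[OF that] that unfolding u_def mu_def Q_def W_def by blast
      have dvpos: "0 < dd v" using dd_pos step(1) by blast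
      have dwpos: "0 < dd w" if "w \<in> W" for w using dd_pos wV that by blast
      have cpos: "0 < c w" if "w \<in> W" for w using dvpos dwpos that c_def by simp
      have csum: "(\<Sum>w\<in>W. c w) = 1" using dd_sum[OF step(1) False] dvpos
        unfolding c_def W_def by (simp add: sum_divide_distrib[symmetric])
      have Spos: "0 < S" unfolding S_def using finW by (intro sum_pos) auto
      have lnv: "ln (Lam v x) = - a * ln S"
        using ln_lam_rec[OF step(1) False xpos] unfolding S_def a_def u_def W_def .
      have h1p: "exp (- mu w / a) \<le> exp (- u w / a)" if "w \<in> W" for w
      proof -
        have "u w \<le> mu w" using IH that by blast
        then have "- mu w / a \<le> - u w / a" using a by (simp add: divide_right_mono)
        then show ?thesis by simp
      qed
      have h1: "(\<Sum>w\<in>W. exp (- mu w / a)) \<le> S" unfolding S_def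
        using h1p by (rule sum_mono)
      have h2: "(\<Sum>w\<in>W. c w * exp (s w)) = (\<Sum>w\<in>W. exp (- mu w / a))"
      proof (rule sum.cong[OF refl])
        fix w assume w: "w \<in> W"
        have "s w = ln (dd v / dd w) + (- mu w / a)" unfolding s_def by simp
        then have "exp (s w) = exp (ln (dd v / dd w)) * exp (- mu w / a)" by (simp only: exp_add)
        also have "exp (ln (dd v / dd w)) = dd v / dd w" using dvpos dwpos[OF w] by simp
        finally show "c w * exp (s w) = exp (- mu w / a)"
          unfolding c_def using dvpos dwpos[OF w] by simp
      qed
      have h3: "exp (\<Sum>w\<in>W. c w * s w) \<le> (\<Sum>w\<in>W. c w * exp (s w))"
        using jensen_exp(1)[OF finW cpos csum] .
      have h4: "- a * (\<Sum>w\<in>W. c w * s w) = ln (Ls v) + (\<Sum>j\<in>lv v. ln (x j)) / dd v"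
      proof -
        have Qv: "(\<Sum>j\<in>lv v. ln (x j)) = (\<Sum>w\<in>W. Q w)"
          unfolding Q_def W_def lv_int[OF step(1) False] using chd_fin lv_fin lv_disj
          by (intro sum.UNION_disjoint) auto
        have pt: "- a * (c w * s w) = c w * (- a * ln (dd v)) + c w * (a * ln (dd w) + ln (Ls w)) + Q w / dd v"
          if w: "w \<in> W" for w
        proof -
          have L: "ln (dd v / dd w) = ln (dd v) - ln (dd w)" using dvpos dwpos[OF w] by (simp add: ln_div)
          show ?thesis unfolding s_def c_def mu_def L using a dvpos dwpos[OF w]
            by (simp add: field_simps)
        qed
        have "- a * (\<Sum>w\<in>W. c w * s w) = (\<Sum>w\<in>W. c w * (- a * ln (dd v)) + c w * (a * ln (dd w) + ln (Ls w)) + Q w / dd v)"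
          unfolding sum_distrib_left using pt by (rule sum.cong[OF refl])
        also have "\<dots> = (\<Sum>w\<in>W. c w) * (- a * ln (dd v)) + (\<Sum>w\<in>W. c w * (a * ln (dd w) + ln (Ls w))) + (\<Sum>w\<in>W. Q w) / dd v"
          by (simp add: sum.distrib sum_distrib_right sum_divide_distrib sum_subtractf)
        also have "\<dots> = ln (Ls v) + (\<Sum>j\<in>lv v. ln (x j)) / dd v"
          using csum Qv ln_Ls_rec[OF step(1) False] unfolding c_def a_def W_def by simp
        finally show ?thesis .
      qed
      have h5: "(\<Sum>w\<in>W. c w * s w) \<le> ln S"
      proof -
        have "exp (\<Sum>w\<in>W. c w * s w) \<le> S" using h1 h2 h3 by linarith
        then show ?thesis using Spos by (metis exp_le_cancel_iff exp_ln)
      qed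
      have "a * (\<Sum>w\<in>W. c w * s w) \<le> a * ln S" using mult_left_mono[OF h5] a by simp
      then have bound: "ln (Lam v x) \<le> ln (Ls v) + (\<Sum>j\<in>lv v. ln (x j)) / dd v"
        using lnv h4 by linarith
      moreover have "ln (Lam v x) = ln (Ls v) + (\<Sum>j\<in>lv v. ln (x j)) / dd v \<longrightarrow> (\<forall>j\<in>lv v. x j = Lam v x * beta v j)"
      proof
        assume E: "ln (Lam v x) = ln (Ls v) + (\<Sum>j\<in>lv v. ln (x j)) / dd v"
        have "a * ln S = a * (\<Sum>w\<in>W. c w * s w)" using E lnv h4 by linarith
        then have e0: "ln S = (\<Sum>w\<in>W. c w * s w)" using a by simp
        have eS: "S = exp (\<Sum>w\<in>W. c w * s w)" unfolding e0[symmetric] using Spos by simp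
        have eJ: "exp (\<Sum>w\<in>W. c w * s w) = (\<Sum>w\<in>W. c w * exp (s w))" using h1 h2 h3 eS by linarith
        have eM: "(\<Sum>w\<in>W. exp (- mu w / a)) = S" using h1 h2 h3 eS by linarith
        have umu: "u w = mu w" if w: "w \<in> W" for w
        proof -
          have sz: "(\<Sum>w\<in>W. exp (- u w / a) - exp (- mu w / a)) = 0" using eM unfolding S_def by (simp add: sum_subtractf)
          have nn: "\<And>w. w \<in> W \<Longrightarrow> 0 \<le> exp (- u w / a) - exp (- mu w / a)" using h1p by simp
          have "\<forall>w\<in>W. exp (- u w / a) - exp (- mu w / a) = 0" using sum_nonneg_eq_0_iff[OF finW(1) nn] sz by simp
          then have "exp (- u w / a) - exp (- mu w / a) = 0" using w by blast
          then have "- u w / a = - mu w / a" by simp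
          then show ?thesis using a by simp
        qed
        have sw: "s w = ln S" if "w \<in> W" for w using jensen_exp(2)[OF finW cpos csum eJ that] e0 by simp
        show "\<forall>j\<in>lv v. x j = Lam v x * beta v j"
        proof
          fix j assume j: "j \<in> lv v"
          then obtain w where w: "w \<in> W" "j \<in> lv w" using lv_int[OF step(1) False] W_def by blast
          have wc: "w \<in> chd v" using w W_def by simp
          have xj: "x j = Lam w x * beta w j" using IH[OF w(1)] umu[OF w(1)] w(2) by blast
          have "mu w / a = ln (dd v / dd w) - ln S" using sw[OF w(1)] unfolding s_def by simp
          then have "mu w = a * (ln (dd v / dd w) - ln S)" using a by (simp add: divide_eq_eq mult.commute)
          then have "mu w = a * ln (dd v / dd w) - a * ln S" by (simp add: right_diff_distrib)
          then have uw: "u w = a * ln (dd v / dd w) + ln (Lam v x)" using umu[OF w(1)] lnv by simp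
          have lwpos: "0 < Lam w x" using lam_pos[OF wV[OF w(1)], of x] xw[OF w(1)] by blast
          have lvpos: "0 < Lam v x" using lam_pos[OF step(1), of x] xpos by blast
          have "Lam w x = exp (u w)" unfolding u_def using lwpos by simp
          also have "\<dots> = exp (a * ln (dd v / dd w)) * Lam v x" unfolding uw exp_add using lvpos by simp
          also have "exp (a * ln (dd v / dd w)) = (dd v / dd w) powr a"
            unfolding powr_def using dvpos dwpos[OF w(1)] by simp
          also have "\<dots> = dd v powr a * dd w powr (- a)"
            using dvpos dwpos[OF w(1)] by (simp add: powr_divide powr_minus_divide)
          finally have "Lam w x = dd v powr a * dd w powr (- a) * Lam v x" .
          then show "x j = Lam v x * beta v j" unfolding xj beta_rec[OF wc w(2)]
            by (simp add: a_def mult_ac)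
        qed
      qed
      ultimately show ?thesis by blast
    qed
  qed
qed

end


context tctx begin

lemma lam_beta: "v \<in> V \<Longrightarrow> \<forall>c x. 0 < c \<longrightarrow> (\<forall>j\<in>lv v. x j = c * beta v j) \<longrightarrow> Lam v x = c"
proof (induction v rule: tree_induct)
  case (step v)
  show ?case
  proof (intro allI impI)
    fix c :: real and x :: "nat \<Rightarrow> real"
    assume c: "0 < c" and x: "\<forall>j\<in>lv v. x j = c * beta v j"
    show "Lam v x = c"
    proof (cases "chd v = {}")
      case True
      then show ?thesis using lv_leaf[OF step(1) True] lam_leaf[OF True] beta_leaf[OF step(1) True] x by simp
    next
      case False
      define a where "a = \<alpha> v"
      have a: "0 < a" using apos_int step(1) False a_def by blast
      have dvpos: "0 < dd v" using dd_pos step(1) by blast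
      have xpos: "\<forall>j\<in>lv v. 0 < x j" using x c beta_pos[OF step(1)] by simp
      define cw where "cw w = c * dd v powr a * dd w powr (- a)" for w
      have lw: "Lam w x = cw w" if w: "w \<in> chd v" for w
      proof -
        have "0 < cw w" unfolding cw_def using c dd_powr_pos[OF step(1)] dd_powr_pos[OF ch_V[OF w]] by simp
        moreover have "\<forall>j\<in>lv w. x j = cw w * beta w j"
          using x lv_sub[OF w step(1)] beta_rec[OF w] unfolding cw_def a_def by (auto simp: mult_ac)
        ultimately show ?thesis using step(2)[OF w] by blast
      qed
      have pt: "exp (- ln (Lam w x) / \<alpha> v) = exp (- ln c / a) * (dd w / dd v)" if w: "w \<in> chd v" for w
      proof -
        have dwpos: "0 < dd w" using dd_pos ch_V[OF w] by blast
        have "ln (cw w) = ln c + a * ln (dd v) - a * ln (dd w)"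
          unfolding cw_def using c dvpos dwpos by (simp add: ln_mult)
        then have E: "- ln (Lam w x) / \<alpha> v = - ln c / a + (ln (dd w) - ln (dd v))"
          unfolding lw[OF w] a_def[symmetric] using a by (simp add: field_simps)
        have "exp (- ln (Lam w x) / \<alpha> v) = exp (- ln c / a) * exp (ln (dd w) - ln (dd v))"
          unfolding E by (rule exp_add)
        also have "exp (ln (dd w) - ln (dd v)) = dd w / dd v"
          using dvpos dwpos by (simp add: exp_diff)
        finally show ?thesis .
      qed
      have "(\<Sum>w\<in>chd v. exp (- ln (Lam w x) / \<alpha> v)) = exp (- ln c / a) * ((\<Sum>w\<in>chd v. dd w) / dd v)"
        using pt by (simp add: sum_distrib_left sum_divide_distrib)
      also have "\<dots> = exp (- ln c / a)" using dd_sum[OF step(1) False] dvpos by simp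
      finally have "ln (Lam v x) = ln c"
        using ln_lam_rec[OF step(1) False xpos] a unfolding a_def by simp
      then show ?thesis using lam_pos[OF step(1) xpos] c by simp
    qed
  qed
qed

lemma sum_ln_beta: "v \<in> V \<Longrightarrow> (\<Sum>j\<in>lv v. ln (beta v j)) = - dd v * ln (Ls v)"
proof (induction v rule: tree_induct)
  case (step v)
  show ?case
  proof (cases "chd v = {}")
    case True
    then show ?thesis using lv_leaf[OF step(1) True] lstar_leaf[OF True] beta_leaf[OF step(1) True] by simp
  next
    case False
    define a where "a = \<alpha> v"
    have dvpos: "0 < dd v" using dd_pos step(1) by blast
    have inner: "(\<Sum>j\<in>lv w. ln (beta v j)) = dd w * (a * ln (dd v) - a * ln (dd w)) - dd w * ln (Ls w)"
      if w: "w \<in> chd v" for w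
    proof -
      have dwpos: "0 < dd w" using dd_pos ch_V[OF w] by blast
      have "(\<Sum>j\<in>lv w. ln (beta v j)) = (\<Sum>j\<in>lv w. (a * ln (dd v) - a * ln (dd w)) + ln (beta w j))"
      proof (rule sum.cong[OF refl])
        fix j assume j: "j \<in> lv w"
        show "ln (beta v j) = (a * ln (dd v) - a * ln (dd w)) + ln (beta w j)"
          unfolding beta_rec[OF w j] a_def using dvpos dwpos beta_pos[OF ch_V[OF w], of j]
          by (simp add: ln_mult)
      qed
      also have "\<dots> = dd w * (a * ln (dd v) - a * ln (dd w)) + (\<Sum>j\<in>lv w. ln (beta w j))"
        by (simp add: sum.distrib dv_def)
      finally show ?thesis using step(2)[OF w] by simp
    qed
    have "(\<Sum>j\<in>lv v. ln (beta v j)) = (\<Sum>w\<in>chd v. \<Sum>j\<in>lv w. ln (beta v j))"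
      unfolding lv_int[OF step(1) False] using chd_fin lv_fin lv_disj
      by (intro sum.UNION_disjoint) auto
    also have "\<dots> = (\<Sum>w\<in>chd v. dd w * (a * ln (dd v)) - dd w * (a * ln (dd w) + ln (Ls w)))"
      using inner by (intro sum.cong) (auto simp: algebra_simps)
    also have "\<dots> = (\<Sum>w\<in>chd v. dd w) * (a * ln (dd v)) - (\<Sum>w\<in>chd v. dd w * (a * ln (dd w) + ln (Ls w)))"
      by (simp add: sum_subtractf sum_distrib_right)
    also have "\<dots> = - dd v * ln (Ls v)"
    proof -
      have "dd v * (\<Sum>w\<in>chd v. dd w / dd v * (a * ln (dd w) + ln (Ls w)))
          = (\<Sum>w\<in>chd v. dd w * (a * ln (dd w) + ln (Ls w)))"
        unfolding sum_distrib_left using dvpos by simp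
      then show ?thesis unfolding ln_Ls_rec[OF step(1) False] dd_sum[OF step(1) False, symmetric]
        a_def[symmetric] by (simp add: algebra_simps)
    qed
    finally show ?thesis .
  qed
qed

lemma closed_form: "v \<in> V \<Longrightarrow> dd v * ln (Ls v) + \<alpha> v * dd v * ln (dd v) =
   (\<Sum>u\<in>isb v - {v}. (\<alpha> (pa u) - \<alpha> u) * dd u * ln (dd u))"
proof (induction v rule: tree_induct)
  case (step v)
  define f where "f u = (\<alpha> (pa u) - \<alpha> u) * dd u * ln (dd u)" for u
  show ?case
  proof (cases "chd v = {}")
    case True
    then show ?thesis using isb_leaf[OF step(1) True] lstar_leaf[OF True] dd_leaf[OF step(1) True] by simp
  next
    case False
    define a where "a = \<alpha> v"
    have dvpos: "0 < dd v" using dd_pos step(1) by blast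
    have inner: "(\<Sum>u\<in>isb w. f u) = dd w * (a * ln (dd w) + ln (Ls w))" if w: "w \<in> chd v" for w
    proof -
      have wV: "w \<in> V" using ch_V[OF w] .
      have "(\<Sum>u\<in>isb w. f u) = f w + (\<Sum>u\<in>isb w - {w}. f u)"
      proof (cases "chd w = {}")
        case True
        then show ?thesis using isb_leaf[OF wV True] dd_leaf[OF wV True] unfolding f_def by simp
      next
        case False
        have "(\<Sum>u\<in>isb w. f u) = (\<Sum>u\<in>insert w (isb w - {w}). f u)"
          using isb_int[OF wV False] by simp
        also have "\<dots> = f w + (\<Sum>u\<in>isb w - {w}. f u)"
          using isb_fin by (intro sum.insert) auto
        finally show ?thesis .
      qed
      also have "\<dots> = (a - \<alpha> w) * dd w * ln (dd w) + (dd w * ln (Ls w) + \<alpha> w * dd w * ln (dd w))"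
        using step(2)[OF w] ch_pa[OF w] unfolding f_def a_def by simp
      also have "\<dots> = dd w * (a * ln (dd w) + ln (Ls w))" by (simp add: algebra_simps)
      finally show ?thesis .
    qed
    have "(\<Sum>u\<in>isb v - {v}. f u) = (\<Sum>w\<in>chd v. \<Sum>u\<in>isb w. f u)"
      unfolding isb_dec[OF step(1)] using chd_fin isb_fin isb_disj
      by (intro sum.UNION_disjoint) auto
    also have "\<dots> = (\<Sum>w\<in>chd v. dd w * (a * ln (dd w) + ln (Ls w)))"
      using inner by simp
    also have "\<dots> = dd v * (\<Sum>w\<in>chd v. dd w / dd v * (a * ln (dd w) + ln (Ls w)))"
      unfolding sum_distrib_left using dvpos by simp
    also have "\<dots> = dd v * ln (Ls v) + \<alpha> v * dd v * ln (dd v)"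
      unfolding ln_Ls_rec[OF step(1) False] a_def by (simp add: algebra_simps)
    finally show ?thesis unfolding f_def by simp
  qed
qed

end


theorem theorem4p6:
  fixes V :: "nat set" and r :: nat and pa :: "nat \<Rightarrow> nat" and d :: nat
    and \<psi> :: "nat \<Rightarrow> real \<Rightarrow> real" and \<alpha> :: "nat \<Rightarrow> real"
  assumes tree: "is_rooted_tree V r pa d"
    and gens: "\<forall>v \<in> internal V d. Psi_inf (\<psi> v)"
    and alpha_pos: "\<forall>v \<in> internal V d. 0 < \<alpha> v"
    and regvar: "\<forall>v \<in> internal V d. regularly_varying (\<psi> v) (- \<alpha> v)"
    and nesting: "\<forall>v \<in> internal V d - {r}. nesting_cond (\<psi> (pa v)) (\<psi> v)"
  shows
    "\<forall>v \<in> internal V d.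
       \<comment> \<open>(i)\<close>
       mtcm V r pa d \<alpha> v = lstar V r pa d \<alpha> v \<and>
       \<comment> \<open>(ii)\<close>
       lstar V r pa d \<alpha> v =
         dv V r pa d v powr (- \<alpha> v) *
         (\<Prod>w \<in> internal_sub V r pa d v - {v}.
            dv V r pa d w powr ((\<alpha> (pa w) - \<alpha> w) * dv V r pa d w / dv V r pa d v)) \<and>
       \<comment> \<open>(iii) a maximizer exists, and every maximizer has the stated coordinates\<close>
       (\<exists>b. feasible V r pa d v b \<and> tail_cop V r pa \<alpha> v b = mtcm V r pa d \<alpha> v) \<and>
       (\<forall>b. feasible V r pa d v b \<and> tail_cop V r pa \<alpha> v b = mtcm V r pa d \<alpha> v \<longrightarrow>
          (\<forall>j \<in> le V r pa d v.
             b j = lstar V r pa d \<alpha> v * dv V r pa d v powr (\<alpha> v) *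
                   (\<Prod>w \<in> anc V r pa v j. dv V r pa d w powr (\<alpha> w - \<alpha> (pa w)))))"
proof
  interpret tctx V r pa d \<alpha> using tree alpha_pos by unfold_locales
  fix v assume vi: "v \<in> internal V d"
  have vV: "v \<in> V" and ne: "chd v \<noteq> {}" using vi internal_iff by auto
  define L where "L = Ls v"
  have Lpos: "0 < L" using Ls_pos[OF vV] L_def by simp
  have dvpos: "0 < dd v" using dd_pos[OF vV] .
  define B where "B j = L * beta v j" for j
  have Bpos: "\<forall>j\<in>lv v. 0 < B j" unfolding B_def using Lpos beta_pos[OF vV] by simp
  have "ln (\<Prod>j\<in>lv v. B j) = (\<Sum>j\<in>lv v. ln (B j))"
    using Bpos lv_fin by (intro ln_prod) auto
  also have "\<dots> = (\<Sum>j\<in>lv v. ln L + ln (beta v j))"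
    unfolding B_def
  proof (rule sum.cong[OF refl])
    fix j
    have "0 < beta v j" using beta_pos[OF vV] .
    then show "ln (L * beta v j) = ln L + ln (beta v j)" using Lpos by (simp add: ln_mult)
  qed
  also have "\<dots> = dd v * ln L + (\<Sum>j\<in>lv v. ln (beta v j))"
    by (simp add: sum.distrib dv_def)
  also have "\<dots> = 0" using sum_ln_beta[OF vV] L_def by simp
  finally have "ln (\<Prod>j\<in>lv v. B j) = 0" .
  moreover have "0 < (\<Prod>j\<in>lv v. B j)" using Bpos by (intro prod_pos) auto
  ultimately have "(\<Prod>j\<in>lv v. B j) = 1" by simp
  then have Bfeas: "feasible V r pa d v B" unfolding feasible_def using Bpos by simp
  have LamB: "Lam v B = L"
    by (rule lam_beta[OF vV, rule_format]) (use Lpos B_def in auto)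
  have feas_ln: "(\<Sum>j\<in>lv v. ln (b j)) = 0" if "feasible V r pa d v b" for b
  proof -
    have "(\<Sum>j\<in>lv v. ln (b j)) = ln (\<Prod>j\<in>lv v. b j)"
      using that lv_fin unfolding feasible_def by (intro ln_prod[symmetric]) auto
    then show ?thesis using that unfolding feasible_def by simp
  qed
  have bnd: "Lam v b \<le> L" if fb: "feasible V r pa d v b" for b
  proof -
    have bpos: "\<forall>j\<in>lv v. 0 < b j" using fb unfolding feasible_def by simp
    have mb: "ln (Lam v b) \<le> ln (Ls v) + (\<Sum>j\<in>lv v. ln (b j)) / dd v"
      using mp[OF spec[OF main_bound[OF vV], of b] bpos] by (rule conjunct1)
    have "ln (Lam v b) \<le> ln L" using mb feas_ln[OF fb] L_def by simp
    then show ?thesis using lam_pos[OF vV bpos] Lpos by simp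
  qed
  have mt: "mtcm V r pa d \<alpha> v = L"
    unfolding mtcm_def
  proof (rule cSup_eq_maximum)
    show "L \<in> {Lam v b |b. feasible V r pa d v b}" using Bfeas LamB[symmetric] by (intro CollectI exI conjI)
    show "\<And>x. x \<in> {Lam v b |b. feasible V r pa d v b} \<Longrightarrow> x \<le> L" using bnd by blast
  qed
  have ii: "Ls v = dd v powr (- \<alpha> v) *
         (\<Prod>w \<in> isb v - {v}. dd w powr ((\<alpha> (pa w) - \<alpha> w) * dd w / dd v))"
  proof -
    have fpos: "0 < dd w powr ((\<alpha> (pa w) - \<alpha> w) * dd w / dd v)" if "w \<in> isb v - {v}" for w
      using dd_powr_pos isb_V that by blast
    have Ppos: "0 < (\<Prod>w \<in> isb v - {v}. dd w powr ((\<alpha> (pa w) - \<alpha> w) * dd w / dd v))"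
      using fpos by (intro prod_pos) auto
    have "ln (dd v powr (- \<alpha> v) *
         (\<Prod>w \<in> isb v - {v}. dd w powr ((\<alpha> (pa w) - \<alpha> w) * dd w / dd v)))
       = - \<alpha> v * ln (dd v) + (\<Sum>w \<in> isb v - {v}. ln (dd w powr ((\<alpha> (pa w) - \<alpha> w) * dd w / dd v)))"
    proof -
      have "ln (\<Prod>w \<in> isb v - {v}. dd w powr ((\<alpha> (pa w) - \<alpha> w) * dd w / dd v))
         = (\<Sum>w \<in> isb v - {v}. ln (dd w powr ((\<alpha> (pa w) - \<alpha> w) * dd w / dd v)))"
        using fpos isb_fin by (intro ln_prod) auto
      then show ?thesis using Ppos dvpos by (simp add: ln_mult)
    qed
    also have "\<dots> = - \<alpha> v * ln (dd v) + (\<Sum>w \<in> isb v - {v}. (\<alpha> (pa w) - \<alpha> w) * dd w * ln (dd w)) / dd v"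
      by (simp add: sum_divide_distrib)
    also have "\<dots> = ln (Ls v)"
      using closed_form[OF vV] dvpos by (simp add: field_simps)
    finally show ?thesis using Ppos dvpos Ls_pos[OF vV] by simp
  qed
  have iii: "\<forall>b. feasible V r pa d v b \<and> Lam v b = mtcm V r pa d \<alpha> v \<longrightarrow>
          (\<forall>j \<in> lv v. b j = Ls v * dd v powr (\<alpha> v) *
                   (\<Prod>w \<in> anc V r pa v j. dd w powr (\<alpha> w - \<alpha> (pa w))))"
  proof (intro allI impI)
    fix b assume h: "feasible V r pa d v b \<and> Lam v b = mtcm V r pa d \<alpha> v"
    have bpos: "\<forall>j\<in>lv v. 0 < b j" using h unfolding feasible_def by simp
    have "ln (Lam v b) = ln (Ls v) + (\<Sum>j\<in>lv v. ln (b j)) / dd v"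
      using h mt feas_ln L_def by simp
    then have "\<forall>j\<in>lv v. b j = Lam v b * beta v j"
      using mp[OF spec[OF main_bound[OF vV], of b] bpos] by blast
    then show "\<forall>j \<in> lv v. b j = Ls v * dd v powr (\<alpha> v) *
                   (\<Prod>w \<in> anc V r pa v j. dd w powr (\<alpha> w - \<alpha> (pa w)))"
      using h mt L_def unfolding beta_def by (simp add: mult_ac)
  qed
  show "mtcm V r pa d \<alpha> v = Ls v \<and>
       Ls v = dd v powr (- \<alpha> v) *
         (\<Prod>w \<in> isb v - {v}. dd w powr ((\<alpha> (pa w) - \<alpha> w) * dd w / dd v)) \<and>
       (\<exists>b. feasible V r pa d v b \<and> Lam v b = mtcm V r pa d \<alpha> v) \<and>
       (\<forall>b. feasible V r pa d v b \<and> Lam v b = mtcm V r pa d \<alpha> v \<longrightarrow>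
          (\<forall>j \<in> lv v. b j = Ls v * dd v powr (\<alpha> v) *
                   (\<Prod>w \<in> anc V r pa v j. dd w powr (\<alpha> w - \<alpha> (pa w)))))"
  proof (intro conjI)
    show "mtcm V r pa d \<alpha> v = Ls v" using mt L_def by simp
    show "Ls v = dd v powr (- \<alpha> v) *
         (\<Prod>w \<in> isb v - {v}. dd w powr ((\<alpha> (pa w) - \<alpha> w) * dd w / dd v))" by (rule ii)
    show "\<exists>b. feasible V r pa d v b \<and> Lam v b = mtcm V r pa d \<alpha> v"
      by (intro exI[of _ B]) (simp add: Bfeas LamB mt)
    show "\<forall>b. feasible V r pa d v b \<and> Lam v b = mtcm V r pa d \<alpha> v \<longrightarrow>
          (\<forall>j \<in> lv v. b j = Ls v * dd v powr (\<alpha> v) *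
                   (\<Prod>w \<in> anc V r pa v j. dd w powr (\<alpha> w - \<alpha> (pa w))))" by (rule iii)
  qed
qed


end
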